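(* Let $\mathcal{E}=(\mathbf{R},\mathbf{S},\Sigma_{st},\mathbf{F})$ be a constructive relational to RDF data exchange setting in which every st-tgd head is a single atom, with $\mathbf{R}=(\mathcal{R},\Sigma_{fd})$ and $\mathbf{S}=(\mathcal{T},\delta)$. For any $(T,f)\in\mathcal{T}\times\mathcal{F}$: $(T,f)$ is accessible in $\mathcal{E}$ if and only if there exist an instance $I$ of $\mathcal{R}$ (not necessarily satisfying $\Sigma_{fd}$) and a tuple $\bar a$ of constants in the active domain of $I$ such that the core pre-solution for $I$ to $\mathcal{E}$ contains the fact $T(f^F(\bar a))$.
   Context: Values: $\mathsf{Iri}$ (IRIs, containing predicates $\mathsf{Pred}$), $\mathsf{NullIri}$, $\mathsf{Lit}$ with null literals $\mathsf{NullLit}\subseteq\mathsf{Lit}$; non-null values are constants. $\mathbf{R}=(\mathcal{R},\Sigma_{fd})$: relation names with arities and functional dependencies; an instance of $\mathcal{R}$ assigns finite sets of tuples of non-null literals to relation names. A deterministic shape schema $\mathbf{S}=(\mathcal{T},\delta)$ has a partial function $\delta:\mathcal{T}\times\mathsf{Pred}\to(\mathcal{T}\cup\{\mathit{Literal}\})\times\{1,?,*,+\}$, written $\delta(T,p)=S^\mu$. An IRI constructor library $\mathbf{F}=(\mathcal{F},F)$ interprets each $n$-ary $f\in\mathcal{F}$ as $f^F:\mathsf{Lit}^n\to\mathsf{Iri}$ (constants); constructive means: ranges of distinct constructors are disjoint and all st-tgds are full, of the form $\forall\bar x.\,\varphi\Rightarrow\psi$ with $\varphi$ a conjunction of atoms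 over $\mathcal{R}$ and $\psi$ an atom $\mathit{Triple}(t_1,p,t_2)$ ($p\in\mathsf{Pred}$), $T(t)$ or $\mathit{Literal}(t)$, with terms variables or $f(\bar u)$ for a tuple of variables $\bar u$. The core pre-solution of $I$ is the least set $J_0$ of facts containing, for every st-tgd and every assignment $g$ of its variables making its body true in $I$, the head atom with terms evaluated ($f(\bar u)\mapsto f^F(g(\bar u))$), and closed under: $T(a),\mathit{Triple}(a,p,b)\in J_0$ and $\delta(T,p)=S^\mu$ imply $S(b)\in J_0$. $(T,f)$ is accessible in $\mathcal{E}$ (with the sequence $\sigma_0,\dots,\sigma_n$ of st-tgds) if there are types $T_0,\dots,T_n$, constructors $f_0,\dots,f_n$, predicates $p_1,\dots,p_n$ and tuples of variables $\bar x_i,\bar y_i$ such that the head of $\sigma_0$ is $T_0(f_0(\bar y_0))$, the head of $\sigma_i$ is $\mathit{Triple}(f_{i-1}(\bar x_i),p_i,f_i(\bar y_i))$ for $1\le i\le n$, $\delta(T_{i-1},p_i)=T_i^{\mu_i}$ for some $\mu_i$ for $1\le i\le n$, and $T=T_n$, $f=f_n$. *)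

theory Defs
  imports Main
begin

text \<open>IRIs are of type 'i (with distinguished subsets of predicates and of null IRIs),
literals of type 'l (with a distinguished subset of null literals).\<close>

datatype ('i, 'l) rval = IriV 'i | LitV 'l

datatype ('f, 'v) tterm = Var 'v | Fn 'f "'v list"

datatype ('T, 'i, 'f, 'v) head =
    TripleH "('f, 'v) tterm" 'i "('f, 'v) tterm"
  | TypeH 'T "('f, 'v) tterm"
  | LiteralH "('f, 'v) tterm"

text \<open>A (full) st-tgd: body = conjunction of relational atoms R(x1..xk), head = one atom.\<close>
type_synonym ('r, 'T, 'i, 'f, 'v) sttgd = "('r \<times> 'v list) list \<times> ('T, 'i, 'f, 'v) head"

datatype ('T, 'i, 'l) rfact =
    TripleF "('i, 'l) rval" 'i "('i, 'l) rval"
  | TypeF 'T "('i, 'l) rval"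
  | LiteralF "('i, 'l) rval"

datatype 'T stype = ShapeT 'T | LiteralT
datatype mult = One | Opt | Star | Plus

text \<open>A deterministic shape schema is given by a partial function
  delta :: 'T => 'i => ('T stype * mult) option  (defined only on predicates).\<close>

fun stype_fact :: "'T stype \<Rightarrow> ('i, 'l) rval \<Rightarrow> ('T, 'i, 'l) rfact" where
  "stype_fact (ShapeT S) b = TypeF S b"
| "stype_fact LiteralT b = LiteralF b"

fun tterm_vars :: "('f, 'v) tterm \<Rightarrow> 'v set" where
  "tterm_vars (Var x) = {x}"
| "tterm_vars (Fn f us) = set us"

fun head_vars :: "('T, 'i, 'f, 'v) head \<Rightarrow> 'v set" where
  "head_vars (TripleH t1 p t2) = tterm_vars t1 \<union> tterm_vars t2"
| "head_vars (TypeH T t) = tterm_vars t"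
| "head_vars (LiteralH t) = tterm_vars t"

fun head_terms :: "('T, 'i, 'f, 'v) head \<Rightarrow> ('f, 'v) tterm set" where
  "head_terms (TripleH t1 p t2) = {t1, t2}"
| "head_terms (TypeH T t) = {t}"
| "head_terms (LiteralH t) = {t}"

definition body_vars :: "('r \<times> 'v list) list \<Rightarrow> 'v set" where
  "body_vars body = (\<Union>(r, xs) \<in> set body. set xs)"

definition wf_sttgd ::
  "'r set \<Rightarrow> ('r \<Rightarrow> nat) \<Rightarrow> ('f \<Rightarrow> nat) \<Rightarrow> 'i set \<Rightarrow> ('r, 'T, 'i, 'f, 'v) sttgd \<Rightarrow> bool" where
  "wf_sttgd Rel arity farity Pred \<sigma> \<longleftrightarrow>
     (\<forall>(r, xs) \<in> set (fst \<sigma>). r \<in> Rel \<and> length xs = arity r) \<and>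
     (\<forall>t \<in> head_terms (snd \<sigma>). \<forall>f us. t = Fn f us \<longrightarrow> length us = farity f) \<and>
     (\<forall>t1 p t2. snd \<sigma> = TripleH t1 p t2 \<longrightarrow> p \<in> Pred \<and> (\<exists>f us. t1 = Fn f us)) \<and>
     head_vars (snd \<sigma>) \<subseteq> body_vars (fst \<sigma>)"

text \<open>A functional dependency of relation r: a pair of sets of attribute positions (X, Y).\<close>
definition wf_rschema :: "'r set \<Rightarrow> ('r \<Rightarrow> nat) \<Rightarrow> ('r \<times> nat set \<times> nat set) set \<Rightarrow> bool" where
  "wf_rschema Rel arity fds \<longleftrightarrow> finite Rel \<and>
     (\<forall>(r, X, Y) \<in> fds. r \<in> Rel \<and> X \<subseteq> {0..<arity r} \<and> Y \<subseteq> {0..<arity r})"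

text \<open>An instance of the relational schema (functional dependencies NOT required):
  finite sets of tuples of non-null literals of the right arity.\<close>
definition is_instance ::
  "'r set \<Rightarrow> ('r \<Rightarrow> nat) \<Rightarrow> 'l set \<Rightarrow> ('r \<Rightarrow> 'l list set) \<Rightarrow> bool" where
  "is_instance Rel arity NullLit I \<longleftrightarrow>
     (\<forall>r. r \<notin> Rel \<longrightarrow> I r = {}) \<and>
     (\<forall>r \<in> Rel. finite (I r) \<and> (\<forall>t \<in> I r. length t = arity r \<and> set t \<inter> NullLit = {}))"

definition adom :: "('r \<Rightarrow> 'l list set) \<Rightarrow> 'l set" where
  "adom I = (\<Union>r. \<Union>t \<in> I r. set t)"

definition constructive_setting ::
  "'i set \<Rightarrow> 'i set \<Rightarrow> 'l set \<Rightarrow>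
   'r set \<Rightarrow> ('r \<Rightarrow> nat) \<Rightarrow> ('r \<times> nat set \<times> nat set) set \<Rightarrow>
   ('T \<Rightarrow> 'i \<Rightarrow> ('T stype \<times> mult) option) \<Rightarrow>
   ('r, 'T, 'i, 'f, 'v) sttgd set \<Rightarrow>
   ('f \<Rightarrow> nat) \<Rightarrow> ('f \<Rightarrow> 'l list \<Rightarrow> 'i) \<Rightarrow> bool" where
  "constructive_setting Pred NullIri NullLit Rel arity fds \<delta> \<Sigma>st farity F \<longleftrightarrow>
     (\<exists>c. c \<notin> NullLit) \<and>
     Pred \<inter> NullIri = {} \<and>
     wf_rschema Rel arity fds \<and>
     (\<forall>T p. \<delta> T p \<noteq> None \<longrightarrow> p \<in> Pred) \<and>
     finite \<Sigma>st \<and> (\<forall>\<sigma> \<in> \<Sigma>st. wf_sttgd Rel arity farity Pred \<sigma>) \<and>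
     (\<forall>f as. length as = farity f \<longrightarrow> F f as \<notin> NullIri) \<and>
     (\<forall>f g as bs. f \<noteq> g \<longrightarrow> length as = farity f \<longrightarrow> length bs = farity g \<longrightarrow> F f as \<noteq> F g bs)"

fun eval_tterm :: "('f \<Rightarrow> 'l list \<Rightarrow> 'i) \<Rightarrow> ('v \<Rightarrow> 'l) \<Rightarrow> ('f, 'v) tterm \<Rightarrow> ('i, 'l) rval" where
  "eval_tterm F g (Var x) = LitV (g x)"
| "eval_tterm F g (Fn f us) = IriV (F f (map g us))"

fun eval_head :: "('f \<Rightarrow> 'l list \<Rightarrow> 'i) \<Rightarrow> ('v \<Rightarrow> 'l) \<Rightarrow> ('T, 'i, 'f, 'v) head \<Rightarrow> ('T, 'i, 'l) rfact" where
  "eval_head F g (TripleH t1 p t2) = TripleF (eval_tterm F g t1) p (eval_tterm F g t2)"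
| "eval_head F g (TypeH T t) = TypeF T (eval_tterm F g t)"
| "eval_head F g (LiteralH t) = LiteralF (eval_tterm F g t)"

definition body_true :: "('r \<Rightarrow> 'l list set) \<Rightarrow> ('v \<Rightarrow> 'l) \<Rightarrow> ('r \<times> 'v list) list \<Rightarrow> bool" where
  "body_true I g body \<longleftrightarrow> (\<forall>(r, xs) \<in> set body. map g xs \<in> I r)"

inductive_set core_pre ::
  "('T \<Rightarrow> 'i \<Rightarrow> ('T stype \<times> mult) option) \<Rightarrow> ('r, 'T, 'i, 'f, 'v) sttgd set \<Rightarrow>
   ('f \<Rightarrow> 'l list \<Rightarrow> 'i) \<Rightarrow> ('r \<Rightarrow> 'l list set) \<Rightarrow> ('T, 'i, 'l) rfact set"
  for \<delta> \<Sigma>st F I where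
  tgd: "\<sigma> \<in> \<Sigma>st \<Longrightarrow> body_true I g (fst \<sigma>) \<Longrightarrow> eval_head F g (snd \<sigma>) \<in> core_pre \<delta> \<Sigma>st F I"
| close: "TypeF T a \<in> core_pre \<delta> \<Sigma>st F I \<Longrightarrow> TripleF a p b \<in> core_pre \<delta> \<Sigma>st F I \<Longrightarrow>
          \<delta> T p = Some (S, \<mu>) \<Longrightarrow> stype_fact S b \<in> core_pre \<delta> \<Sigma>st F I"

definition accessible ::
  "('T \<Rightarrow> 'i \<Rightarrow> ('T stype \<times> mult) option) \<Rightarrow> ('r, 'T, 'i, 'f, 'v) sttgd set \<Rightarrow> 'T \<Rightarrow> 'f \<Rightarrow> bool" where
  "accessible \<delta> \<Sigma>st T f \<longleftrightarrow>
     (\<exists>(n::nat) (\<sigma>::nat \<Rightarrow> ('r, 'T, 'i, 'f, 'v) sttgd) (Ts::nat \<Rightarrow> 'T) (fs::nat \<Rightarrow> 'f)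
        (ps::nat \<Rightarrow> 'i) (xs::nat \<Rightarrow> 'v list) (ys::nat \<Rightarrow> 'v list) (\<mu>::nat \<Rightarrow> mult).
        (\<forall>i \<le> n. \<sigma> i \<in> \<Sigma>st) \<and>
        snd (\<sigma> 0) = TypeH (Ts 0) (Fn (fs 0) (ys 0)) \<and>
        (\<forall>i \<in> {1..n}. snd (\<sigma> i) = TripleH (Fn (fs (i - 1)) (xs i)) (ps i) (Fn (fs i) (ys i)) \<and>
                       \<delta> (Ts (i - 1)) (ps i) = Some (ShapeT (Ts i), \<mu> i)) \<and>
        T = Ts n \<and> f = fs n)"

end

theory Submission
  imports Defs
begin

lemma cs_unfold:
  assumes "constructive_setting Pred NullIri NullLit Rel arity fds \<delta> \<Sigma>st farity F"
  shows "\<exists>c. c \<notin> NullLit" "\<And>\<sigma>. \<sigma> \<in> \<Sigma>st \<Longrightarrow> wf_sttgd Rel arity farity Pred \<sigma>"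
    "\<And>f g as bs. f \<noteq> g \<Longrightarrow> length as = farity f \<Longrightarrow> length bs = farity g \<Longrightarrow> F f as \<noteq> F g bs"
  using assms unfolding constructive_setting_def by blast+

lemma triple_from_tgd:
  assumes "x \<in> core_pre \<delta> \<Sigma>st F I" "x = TripleF a p b"
  shows "\<exists>\<sigma> g t1 t2. \<sigma> \<in> \<Sigma>st \<and> body_true I g (fst \<sigma>) \<and> snd \<sigma> = TripleH t1 p t2 \<and>
            a = eval_tterm F g t1 \<and> b = eval_tterm F g t2"
  using assms
proof (induction rule: core_pre.induct)
  case (tgd \<sigma> g)
  then have e: "eval_head F g (snd \<sigma>) = TripleF a p b" by simp
  then obtain t1 t2 where "snd \<sigma> = TripleH t1 p t2" "a = eval_tterm F g t1" "b = eval_tterm F g t2"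
    by (cases "snd \<sigma>") auto
  then show ?case using tgd(1,2) by blast
next
  case (close T a p b S \<mu>)
  then show ?case by (cases S) auto
qed

lemma bwd:
  assumes cs: "constructive_setting Pred NullIri NullLit Rel arity fds \<delta> \<Sigma>st farity F"
  shows "x \<in> core_pre \<delta> \<Sigma>st F I \<Longrightarrow> x = TypeF T (IriV (F f as)) \<Longrightarrow> length as = farity f
     \<Longrightarrow> accessible \<delta> \<Sigma>st T f"
proof (induction arbitrary: T f as rule: core_pre.induct)
  case (tgd \<sigma> g)
  have wf: "wf_sttgd Rel arity farity Pred \<sigma>" using cs_unfold(2)[OF cs] tgd(1) .
  obtain t where h: "snd \<sigma> = TypeH T t" using tgd(3) by (cases "snd \<sigma>") auto
  obtain f' us where t: "t = Fn f' us" using tgd(3) h by (cases t) auto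
  have lu: "length us = farity f'" using wf h t unfolding wf_sttgd_def by auto
  have "F f' (map g us) = F f as" using tgd(3) h t by simp
  hence ff: "f' = f" using cs_unfold(3)[OF cs, of f' f "map g us" as] lu tgd(4) by auto
  show ?case unfolding accessible_def
    apply (rule exI[of _ 0])
    apply (rule exI[of _ "\<lambda>_. \<sigma>"])
    apply (rule exI[of _ "\<lambda>_. T"])
    apply (rule exI[of _ "\<lambda>_. f"])
    using tgd(1) h t ff by auto
next
  case (close T0 a p b S \<mu>)
  obtain \<sigma> g t1 t2 where s: "\<sigma> \<in> \<Sigma>st" "snd \<sigma> = TripleH t1 p t2"
      "a = eval_tterm F g t1" "b = eval_tterm F g t2"
    using triple_from_tgd[OF close(2) refl] by blast
  have wf: "wf_sttgd Rel arity farity Pred \<sigma>" using cs_unfold(2)[OF cs] s(1) .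
  obtain f1 us1 where t1: "t1 = Fn f1 us1" using wf s(2) unfolding wf_sttgd_def by auto
  have S: "S = ShapeT T" "b = IriV (F f as)" using close(6) by (cases S; auto)+
  obtain f2 us2 where t2: "t2 = Fn f2 us2" using s(4) S(2) by (cases t2) auto
  have l1: "length us1 = farity f1" "length us2 = farity f2"
    using wf s(2) t1 t2 unfolding wf_sttgd_def by auto
  have "F f2 (map g us2) = F f as" using s(4) S(2) t2 by simp
  hence ff: "f2 = f" using cs_unfold(3)[OF cs, of f2 f "map g us2" as] l1 close(7) by auto
  have "accessible \<delta> \<Sigma>st T0 f1"
    using close.IH(1)[of T0 f1 "map g us1"] s(3) t1 l1 by simp
  then obtain n \<sigma>s Ts fs ys xs ps \<mu>s where A:
    "\<forall>i \<le> (n::nat). \<sigma>s i \<in> \<Sigma>st"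
    "snd (\<sigma>s 0) = TypeH (Ts 0) (Fn (fs 0) (ys 0))"
    "\<forall>i \<in> {1..n}. snd (\<sigma>s i) = TripleH (Fn (fs (i - 1)) (xs i)) (ps i) (Fn (fs i) (ys i)) \<and>
                       \<delta> (Ts (i - 1)) (ps i) = Some (ShapeT (Ts i), \<mu>s i)"
    "T0 = Ts n" "f1 = fs n"
    unfolding accessible_def by blast
  show ?case unfolding accessible_def
    apply (rule exI[of _ "Suc n"])
    apply (rule exI[of _ "\<sigma>s(Suc n := \<sigma>)"])
    apply (rule exI[of _ "Ts(Suc n := T)"])
    apply (rule exI[of _ "fs(Suc n := f)"])
    apply (rule exI[of _ "ps(Suc n := p)"])
    apply (rule exI[of _ "xs(Suc n := us1)"])
    apply (rule exI[of _ "ys(Suc n := us2)"])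
    apply (rule exI[of _ "\<mu>s(Suc n := \<mu>)"])
  proof (intro conjI)
    show "\<forall>i\<le>Suc n. (\<sigma>s(Suc n := \<sigma>)) i \<in> \<Sigma>st" using A(1) s(1) by (auto simp: le_Suc_eq)
    show "snd ((\<sigma>s(Suc n := \<sigma>)) 0) = TypeH ((Ts(Suc n := T)) 0) (Fn ((fs(Suc n := f)) 0) ((ys(Suc n := us2)) 0))"
      using A(2) by simp
    show "\<forall>i\<in>{1..Suc n}. snd ((\<sigma>s(Suc n := \<sigma>)) i) = TripleH (Fn ((fs(Suc n := f)) (i - 1)) ((xs(Suc n := us1)) i)) ((ps(Suc n := p)) i)
          (Fn ((fs(Suc n := f)) i) ((ys(Suc n := us2)) i)) \<and>
         \<delta> ((Ts(Suc n := T)) (i - 1)) ((ps(Suc n := p)) i) = Some (ShapeT ((Ts(Suc n := T)) i), (\<mu>s(Suc n := \<mu>)) i)"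
    proof
      fix i assume i: "i \<in> {1..Suc n}"
      show "snd ((\<sigma>s(Suc n := \<sigma>)) i) = TripleH (Fn ((fs(Suc n := f)) (i - 1)) ((xs(Suc n := us1)) i)) ((ps(Suc n := p)) i)
          (Fn ((fs(Suc n := f)) i) ((ys(Suc n := us2)) i)) \<and>
         \<delta> ((Ts(Suc n := T)) (i - 1)) ((ps(Suc n := p)) i) = Some (ShapeT ((Ts(Suc n := T)) i), (\<mu>s(Suc n := \<mu>)) i)"
      proof (cases "i = Suc n")
        case True
        then show ?thesis using s(2) t1 t2 ff A(4,5) close(3) S(1) by simp
      next
        case False
        then have "i \<in> {1..n}" using i by auto
        then show ?thesis using A(3) False i by auto
      qed
    qed
  qed simp_all
qed

lemma fwd:
  assumes cs: "constructive_setting Pred NullIri NullLit Rel arity fds \<delta> \<Sigma>st farity F"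
    and acc: "accessible \<delta> \<Sigma>st T f"
  shows "\<exists>I as. is_instance Rel arity NullLit I \<and>
                   length as = farity f \<and> set as \<subseteq> adom I \<and>
                   TypeF T (IriV (F f as)) \<in> core_pre \<delta> \<Sigma>st F I"
proof -
  obtain c where c: "c \<notin> NullLit" using cs_unfold(1)[OF cs] by blast
  define I where "I = (\<lambda>r. if r \<in> Rel then {replicate (arity r) c} else {})"
  have inst: "is_instance Rel arity NullLit I"
    unfolding is_instance_def I_def using c by auto
  have bt: "body_true I (\<lambda>_. c) (fst \<sigma>)" if "\<sigma> \<in> \<Sigma>st" for \<sigma>
  proof -
    have "wf_sttgd Rel arity farity Pred \<sigma>" using cs_unfold(2)[OF cs] that .
    then show ?thesis unfolding body_true_def wf_sttgd_def I_def
      by (auto simp: map_replicate_const)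
  qed
  obtain n \<sigma>s Ts fs ys xs ps \<mu>s where A:
    "\<forall>i \<le> (n::nat). \<sigma>s i \<in> \<Sigma>st"
    "snd (\<sigma>s 0) = TypeH (Ts 0) (Fn (fs 0) (ys 0))"
    "\<forall>i \<in> {1..n}. snd (\<sigma>s i) = TripleH (Fn (fs (i - 1)) (xs i)) (ps i) (Fn (fs i) (ys i)) \<and>
                       \<delta> (Ts (i - 1)) (ps i) = Some (ShapeT (Ts i), \<mu>s i)"
    "T = Ts n" "f = fs n"
    using acc unfolding accessible_def by blast
  have wfi: "wf_sttgd Rel arity farity Pred (\<sigma>s i)" if "i \<le> n" for i
    using cs_unfold(2)[OF cs] A(1) that by blast
  have lys: "length (ys i) = farity (fs i)" if "i \<le> n" for i
  proof (cases i)
    case 0 then show ?thesis using wfi[OF that] A(2) unfolding wf_sttgd_def by auto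
  next
    case (Suc m)
    then have "i \<in> {1..n}" using that by auto
    then show ?thesis using wfi[OF that] A(3) unfolding wf_sttgd_def by auto
  qed
  have lxs: "length (xs i) = farity (fs (i - 1))" if "i \<in> {1..n}" for i
    using that wfi[of i] A(3) unfolding wf_sttgd_def by auto
  have main: "i \<le> n \<Longrightarrow> TypeF (Ts i) (IriV (F (fs i) (replicate (farity (fs i)) c))) \<in> core_pre \<delta> \<Sigma>st F I" for i
  proof (induction i)
    case 0
    have "eval_head F (\<lambda>_. c) (snd (\<sigma>s 0)) \<in> core_pre \<delta> \<Sigma>st F I"
      using core_pre.tgd[OF _ bt] A(1) by auto
    then show ?case using A(2) lys[of 0] by (simp add: map_replicate_const)
  next
    case (Suc m)
    have im: "Suc m \<in> {1..n}" using Suc by auto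
    have tr: "eval_head F (\<lambda>_. c) (snd (\<sigma>s (Suc m))) \<in> core_pre \<delta> \<Sigma>st F I"
      using core_pre.tgd[OF _ bt] A(1) Suc(2) by auto
    have "TripleF (IriV (F (fs m) (replicate (farity (fs m)) c))) (ps (Suc m))
           (IriV (F (fs (Suc m)) (replicate (farity (fs (Suc m))) c))) \<in> core_pre \<delta> \<Sigma>st F I"
      using tr A(3) im lxs[OF im] lys[of "Suc m"] Suc(2) by (simp add: map_replicate_const)
    from core_pre.close[OF Suc.IH[OF Suc_leD[OF Suc(2)]] this] A(3) im
    show ?case by fastforce
  qed
  have ad: "set (replicate (farity f) c) \<subseteq> adom I"
  proof (cases "farity f = 0")
    case False
    have "length (ys n) > 0" using lys[of n] A(5) False by simp
    then obtain y where y: "y \<in> set (ys n)" by (cases "ys n") auto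
    have "y \<in> head_vars (snd (\<sigma>s n))"
    proof (cases n)
      case 0 then show ?thesis using A(2) y by simp
    next
      case (Suc m)
      then have "n \<in> {1..n}" by auto
      then show ?thesis using A(3) y by auto
    qed
    then have "y \<in> body_vars (fst (\<sigma>s n))" using wfi[of n] unfolding wf_sttgd_def by auto
    then obtain r zs where rz: "(r, zs) \<in> set (fst (\<sigma>s n))" "y \<in> set zs"
      unfolding body_vars_def by auto
    then have "r \<in> Rel" "length zs = arity r" using wfi[of n] unfolding wf_sttgd_def by auto
    then have "c \<in> adom I" using rz(2) unfolding adom_def I_def by (cases zs) force+
    then show ?thesis by auto
  qed simp
  show ?thesis using inst ad main[of n] A(4,5) by (intro exI[of _ I] exI[of _ "replicate (farity f) c"]) simp
qed

theorem lemma1: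
  fixes Pred NullIri :: "'i set" and NullLit :: "'l set"
    and Rel :: "'r set" and arity :: "'r \<Rightarrow> nat" and fds :: "('r \<times> nat set \<times> nat set) set"
    and \<delta> :: "'T \<Rightarrow> 'i \<Rightarrow> ('T stype \<times> mult) option"
    and \<Sigma>st :: "('r, 'T, 'i, 'f, 'v) sttgd set"
    and farity :: "'f \<Rightarrow> nat" and F :: "'f \<Rightarrow> 'l list \<Rightarrow> 'i"
    and T :: 'T and f :: 'f
  assumes "constructive_setting Pred NullIri NullLit Rel arity fds \<delta> \<Sigma>st farity F"
  shows "accessible \<delta> \<Sigma>st T f \<longleftrightarrow>
           (\<exists>I as. is_instance Rel arity NullLit I \<and>
                   length as = farity f \<and> set as \<subseteq> adom I \<and>
                   TypeF T (IriV (F f as)) \<in> core_pre \<delta> \<Sigma>st F I)"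
  using fwd[OF assms] bwd[OF assms] by blast

end
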